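(* Let $\boldsymbol\mu\subset\mathfrak G^{\mathrm{small}}$ be a ratio set. Assume $\boldsymbol\mu$ witnesses $V\in\mathbb T$, the series $S=\sum_{j\ge1}B_j$ converges $\boldsymbol\mu$-geometrically, and for $j=1,2,3,\dots$, $\boldsymbol\mu$ witnesses $A_j$ and $A_j\sim B_jV$. Then $T=\sum_{j\ge1}A_j$ converges $\boldsymbol\mu$-geometrically and $T\sim SV$.
   Context: $\mathbb T$ is the field of real grid-based transseries over the ordered group $\mathfrak G$ of transmonomials, with $\sim$ the usual asymptotic equivalence ($A\sim B$ iff $A-B\prec A$); $\operatorname{mag}T$ is the dominant monomial of $T\ne0$. A ratio set is a finite $\boldsymbol\mu\subset\mathfrak G^{\mathrm{small}}=\{\mathfrak g\prec1\}$; $\boldsymbol\mu^*$ (resp. $\boldsymbol\mu^+$) is the set of products of zero or more (resp. one or more) elements of $\boldsymbol\mu$. Monomials: $\mathfrak m\prec^{\boldsymbol\mu}\mathfrak n$ iff $\mathfrak m/\mathfrak n\in\boldsymbol\mu^+$; transseries: $A\prec^{\boldsymbol\mu}B$ (also written $B\succ^{\boldsymbol\mu}A$) iff each $\mathfrak a\in\operatorname{supp}A$ is $\prec^{\boldsymbol\mu}$ some $\mathfrak b\in\operatorname{supp}B$. $\boldsymbol\mu$ witnesses nonzero $T$ iff $\operatorname{supp}T\subseteq(\operatorname{mag}T)\boldsymbol\mu^*$. A series $\sum_{j\ge1}A_j$ is $\boldsymbol\mu$-geometrically convergent if $\boldsymbol\mu$ witnesses each $A_j$ and $A_j\succ^{\boldsymbol\mu}A_{j+1}$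 for all $j$; such a series converges (point-finitely) in $\mathbb T$. *)

theory Defs
  imports Complex_Main
begin

text \<open>
  Grid-based series over an ordered abelian group of monomials, written additively:
  the monomial product m n is m + n, the unit monomial 1 is 0, and the asymptotic
  order on monomials (m \<prec> n) is m < n.
\<close>

type_synonym 'g series = "'g \<Rightarrow> real"

definition supp :: "'g series \<Rightarrow> 'g set" where
  "supp T = {m. T m \<noteq> 0}"

definition small :: "'g::linordered_ab_group_add \<Rightarrow> bool" where
  "small g \<longleftrightarrow> g < 0"

definition ratio_set :: "'g::linordered_ab_group_add set \<Rightarrow> bool" where
  "ratio_set \<mu> \<longleftrightarrow> finite \<mu> \<and> (\<forall>g\<in>\<mu>. small g)"

definition ratio_star :: "'g::linordered_ab_group_add set \<Rightarrow> 'g set" where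
  "ratio_star \<mu> = {sum_list xs | xs. set xs \<subseteq> \<mu>}"

definition ratio_plus :: "'g::linordered_ab_group_add set \<Rightarrow> 'g set" where
  "ratio_plus \<mu> = {sum_list xs | xs. xs \<noteq> [] \<and> set xs \<subseteq> \<mu>}"

definition mag :: "('g::linorder) series \<Rightarrow> 'g" where
  "mag T = (GREATEST m. T m \<noteq> 0)"

definition asymp_less :: "('g::linorder) series \<Rightarrow> 'g series \<Rightarrow> bool" where
  "asymp_less A B \<longleftrightarrow> B \<noteq> (\<lambda>_. 0) \<and> (A = (\<lambda>_. 0) \<or> mag A < mag B)"

definition asymp_equiv :: "('g::linorder) series \<Rightarrow> 'g series \<Rightarrow> bool" where
  "asymp_equiv A B \<longleftrightarrow> asymp_less (\<lambda>m. A m - B m) A"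

definition series_mult :: "('g::ab_group_add) series \<Rightarrow> 'g series \<Rightarrow> 'g series" where
  "series_mult A B = (\<lambda>m. \<Sum>a\<in>{a. A a \<noteq> 0 \<and> B (m - a) \<noteq> 0}. A a * B (m - a))"

definition mono_less_mu :: "'g::linordered_ab_group_add set \<Rightarrow> 'g \<Rightarrow> 'g \<Rightarrow> bool" where
  "mono_less_mu \<mu> m n \<longleftrightarrow> m - n \<in> ratio_plus \<mu>"

definition series_less_mu :: "'g::linordered_ab_group_add set \<Rightarrow> 'g series \<Rightarrow> 'g series \<Rightarrow> bool" where
  "series_less_mu \<mu> A B \<longleftrightarrow> (\<forall>a\<in>supp A. \<exists>b\<in>supp B. mono_less_mu \<mu> a b)"

definition witnesses :: "'g::linordered_ab_group_add set \<Rightarrow> 'g series \<Rightarrow> bool" where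
  "witnesses \<mu> T \<longleftrightarrow> T \<noteq> (\<lambda>_. 0) \<and> supp T \<subseteq> {mag T + g | g. g \<in> ratio_star \<mu>}"

text \<open>\<mu>-geometric convergence of the series \<Sum>_j A j (indices start at 0 here).\<close>
definition geom_conv :: "'g::linordered_ab_group_add set \<Rightarrow> (nat \<Rightarrow> 'g series) \<Rightarrow> bool" where
  "geom_conv \<mu> A \<longleftrightarrow> (\<forall>j. witnesses \<mu> (A j)) \<and> (\<forall>j. series_less_mu \<mu> (A (Suc j)) (A j))"

definition series_sum :: "(nat \<Rightarrow> 'g series) \<Rightarrow> 'g series" where
  "series_sum A = (\<lambda>m. \<Sum>j\<in>{j. A j m \<noteq> 0}. A j m)"

end

theory Submission
  imports Defs "HOL-Library.Multiset"
begin

lemma nat_incsub: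
  fixes s :: "nat \<Rightarrow> nat"
  shows "\<exists>r::nat\<Rightarrow>nat. strict_mono r \<and> (\<forall>i j. i \<le> j \<longrightarrow> s (r i) \<le> s (r j))"
proof -
  obtain f where f: "strict_mono f" "monoseq (\<lambda>n. s (f n))" using seq_monosub by blast
  show ?thesis
  proof (cases "\<forall>m n. m \<le> n \<longrightarrow> s (f m) \<le> s (f n)")
    case True then show ?thesis using f by blast
  next
    case False
    then have dec: "\<forall>m n. m \<le> n \<longrightarrow> s (f n) \<le> s (f m)" using f(2) unfolding monoseq_def by blast
    obtain N where N: "\<forall>n. s (f N) \<le> s (f n)"
      using ex_has_least_nat[of "\<lambda>_. True" 0 "\<lambda>n. s (f n)"] by blast
    have c: "s (f (n + N)) = s (f N)" for n
      using dec N by (meson le_add2 antisym)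
    have "strict_mono (f \<circ> (\<lambda>n. n + N))"
      using f(1) by (intro strict_mono_o) (auto simp: strict_mono_def)
    moreover have "\<forall>i j. i \<le> j \<longrightarrow> s ((f \<circ> (\<lambda>n. n + N)) i) \<le> s ((f \<circ> (\<lambda>n. n + N)) j)"
      using c by simp
    ultimately show ?thesis by blast
  qed
qed

lemma dickson_chain:
  fixes M :: "nat \<Rightarrow> 'a multiset"
  shows "finite A \<Longrightarrow> \<forall>n. set_mset (M n) \<subseteq> A \<Longrightarrow>
   \<exists>r::nat\<Rightarrow>nat. strict_mono r \<and> (\<forall>i j. i \<le> j \<longrightarrow> M (r i) \<subseteq># M (r j))"
proof (induction A arbitrary: M rule: finite_induct)
  case empty
  then have e: "\<forall>n. M n = {#}" by auto
  show ?case
    apply (rule_tac x="\<lambda>n::nat. n" in exI)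
    using e by (simp add: strict_mono_def)
next
  case (insert g F)
  obtain r1 :: "nat \<Rightarrow> nat" where r1: "strict_mono r1" "\<forall>i j. i \<le> j \<longrightarrow> count (M (r1 i)) g \<le> count (M (r1 j)) g"
    using nat_incsub[of "\<lambda>n. count (M n) g"] by blast
  define N where "N n = filter_mset (\<lambda>x. x \<noteq> g) (M (r1 n))" for n
  have "\<forall>n. set_mset (N n) \<subseteq> F" using insert.prems by (auto simp: N_def)
  then obtain r2 :: "nat \<Rightarrow> nat" where r2: "strict_mono r2" "\<forall>i j. i \<le> j \<longrightarrow> N (r2 i) \<subseteq># N (r2 j)"
    using insert.IH by blast
  have "\<forall>i j. i \<le> j \<longrightarrow> M ((r1 \<circ> r2) i) \<subseteq># M ((r1 \<circ> r2) j)"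
  proof (intro allI impI)
    fix i j :: nat assume ij: "i \<le> j"
    have m: "r2 i \<le> r2 j" using r2(1) ij by (simp add: strict_mono_less_eq)
    show "M ((r1 \<circ> r2) i) \<subseteq># M ((r1 \<circ> r2) j)"
      unfolding subseteq_mset_def
    proof
      fix x
      show "count (M ((r1 \<circ> r2) i)) x \<le> count (M ((r1 \<circ> r2) j)) x"
      proof (cases "x = g")
        case True then show ?thesis using r1(2) m by (simp only: comp_apply)
      next
        case False
        have "count (N (r2 i)) x \<le> count (N (r2 j)) x" using r2(2) ij by (simp add: subseteq_mset_def)
        then show ?thesis using False by (simp add: N_def)
      qed
    qed
  qed
  moreover have "strict_mono (r1 \<circ> r2)" using r1(1) r2(1) by (rule strict_mono_o)
  ultimately show ?case by (intro exI[where x="r1 \<circ> r2"]) (simp only:)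
qed


lemma star_0: "0 \<in> ratio_star \<mu>"
  unfolding ratio_star_def by (auto intro!: exI[where x="[]"])

lemma star_add: "x \<in> ratio_star \<mu> \<Longrightarrow> y \<in> ratio_star \<mu> \<Longrightarrow> x + y \<in> ratio_star \<mu>"
  unfolding ratio_star_def
proof clarify
  fix xs ys assume "set xs \<subseteq> \<mu>" "set ys \<subseteq> \<mu>"
  then show "\<exists>zs. sum_list xs + sum_list ys = sum_list zs \<and> set zs \<subseteq> \<mu>"
    by (intro exI[where x="xs @ ys"]) auto
qed

lemma plus_star: "x \<in> ratio_plus \<mu> \<Longrightarrow> x \<in> ratio_star \<mu>"
  unfolding ratio_plus_def ratio_star_def by auto

lemma plus_add: "x \<in> ratio_plus \<mu> \<Longrightarrow> y \<in> ratio_star \<mu> \<Longrightarrow> x + y \<in> ratio_plus \<mu>"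
  unfolding ratio_star_def ratio_plus_def
proof clarify
  fix xs ys assume "set xs \<subseteq> \<mu>" "set ys \<subseteq> \<mu>" "xs \<noteq> []"
  then show "\<exists>zs. sum_list xs + sum_list ys = sum_list zs \<and> zs \<noteq> [] \<and> set zs \<subseteq> \<mu>"
    by (intro exI[where x="xs @ ys"]) auto
qed

lemma sum_list_neg_le: "\<forall>g\<in>set xs. (g::'g::linordered_ab_group_add) < 0 \<Longrightarrow> sum_list xs \<le> 0"
  by (induction xs) (auto simp: add_nonpos_nonpos)

lemma sum_list_neg_lt: "\<forall>g\<in>set xs. (g::'g::linordered_ab_group_add) < 0 \<Longrightarrow> xs \<noteq> [] \<Longrightarrow> sum_list xs < 0"
  by (induction xs) (auto simp: add_neg_nonpos sum_list_neg_le)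

lemma star_le0: "ratio_set \<mu> \<Longrightarrow> x \<in> ratio_star \<mu> \<Longrightarrow> x \<le> 0"
  unfolding ratio_set_def ratio_star_def small_def by (auto intro!: sum_list_neg_le)

lemma plus_lt0: "ratio_set \<mu> \<Longrightarrow> x \<in> ratio_plus \<mu> \<Longrightarrow> x < 0"
  unfolding ratio_set_def ratio_plus_def small_def by (auto intro!: sum_list_neg_lt)

lemma sum_mset_neg_le: "\<forall>g\<in>set_mset M. (g::'g::linordered_ab_group_add) < 0 \<Longrightarrow> sum_mset M \<le> 0"
  by (induction M) (auto simp: add_nonpos_nonpos)

lemma no_incr:
  assumes rs: "ratio_set \<mu>" and f: "\<forall>n. f n \<in> ratio_star \<mu> \<and> f n < f (Suc n)"
  shows False
proof -
  have "\<forall>n. \<exists>xs. f n = sum_list xs \<and> set xs \<subseteq> \<mu>" using f unfolding ratio_star_def by blast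
  then obtain xs where xs: "\<And>n. f n = sum_list (xs n) \<and> set (xs n) \<subseteq> \<mu>" by metis
  have fin: "finite \<mu>" using rs by (simp add: ratio_set_def)
  obtain r :: "nat \<Rightarrow> nat" where r: "strict_mono r" "\<forall>i j. i \<le> j \<longrightarrow> mset (xs (r i)) \<subseteq># mset (xs (r j))"
    using dickson_chain[OF fin, of "\<lambda>n. mset (xs n)"] xs by auto
  let ?A = "mset (xs (r 0))" and ?B = "mset (xs (r 1))"
  have sub: "?A \<subseteq># ?B" using r(2) by simp
  have eqB: "?A + (?B - ?A) = ?B" using sub by (rule subset_mset.add_diff_inverse)
  have "sum_mset ?B = sum_mset ?A + sum_mset (?B - ?A)"
    using arg_cong[OF eqB, of sum_mset] by simp
  moreover have "sum_mset (?B - ?A) \<le> 0"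
  proof (rule sum_mset_neg_le, clarify)
    fix g assume "g \<in># ?B - ?A"
    then have "g \<in> set (xs (r 1))" by (metis in_diffD set_mset_mset)
    then have "g \<in> \<mu>" using xs[of "r 1"] by blast
    then show "g < 0" using rs by (simp add: ratio_set_def small_def)
  qed
  ultimately have "f (r 1) \<le> f (r 0)" using xs by (simp add: sum_mset_sum_list)
  moreover have "f (r 0) < f (r 1)"
    using r(1) f lift_Suc_mono_less[of f "r 0" "r 1"] by (simp add: strict_mono_def)
  ultimately show False by simp
qed

lemma GE:
  fixes X :: "'g::linordered_ab_group_add set"
  assumes rs: "ratio_set \<mu>" and ne: "X \<noteq> {}" and sub: "\<forall>x\<in>X. x - c \<in> ratio_star \<mu>"
  shows "\<exists>g\<in>X. \<forall>x\<in>X. x \<le> g"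
proof (rule ccontr)
  assume "\<not> ?thesis"
  then have "\<forall>x\<in>X. \<exists>y\<in>X. x < y" by (meson not_le)
  then obtain h where h: "\<forall>x\<in>X. h x \<in> X \<and> x < h x"
    using bchoice[of X "\<lambda>x y. y \<in> X \<and> x < y"] by blast
  obtain x0 where x0: "x0 \<in> X" using ne by blast
  define f where "f n = (h ^^ n) x0" for n
  have fX: "f n \<in> X" for n by (induction n) (auto simp: f_def x0 h)
  have "\<forall>n. f n - c \<in> ratio_star \<mu> \<and> f n - c < f (Suc n) - c"
    using fX sub h by (auto simp: f_def)
  then show False using no_incr[OF rs, of "\<lambda>n. f n - c"] by blast
qed

lemma GE2:
  fixes X :: "'g::linordered_ab_group_add set"
  assumes rs: "ratio_set \<mu>" and ne: "X \<noteq> {}"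
    and sub: "\<forall>x\<in>X. x - c1 \<in> ratio_star \<mu> \<or> x - c2 \<in> ratio_star \<mu>"
  shows "\<exists>g\<in>X. \<forall>x\<in>X. x \<le> g"
proof -
  let ?X1 = "{x\<in>X. x - c1 \<in> ratio_star \<mu>}" and ?X2 = "{x\<in>X. x - c2 \<in> ratio_star \<mu>}"
  show ?thesis
  proof (cases "?X1 = {}")
    case True
    then have "\<forall>x\<in>X. x - c2 \<in> ratio_star \<mu>" using sub by blast
    then show ?thesis using GE[OF rs ne] by blast
  next
    case n1: False
    obtain g1 where g1: "g1 \<in> ?X1" "\<forall>x\<in>?X1. x \<le> g1" using GE[OF rs n1, of c1] by auto
    show ?thesis
    proof (cases "?X2 = {}")
      case True
      then have "\<forall>x\<in>X. x \<le> g1" using sub g1 by blast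
      then show ?thesis using g1 by blast
    next
      case n2: False
      obtain g2 where g2: "g2 \<in> ?X2" "\<forall>x\<in>?X2. x \<le> g2" using GE[OF rs n2, of c2] by auto
      have "\<forall>x\<in>X. x \<le> max g1 g2"
      proof
        fix x assume "x \<in> X"
        then have "x \<in> ?X1 \<or> x \<in> ?X2" using sub by auto
        then show "x \<le> max g1 g2" using g1 g2 by (auto simp: le_max_iff_disj)
      qed
      moreover have "max g1 g2 \<in> X" using g1 g2 by (cases "g1 \<le> g2") (simp_all add: max_def)
      ultimately show ?thesis by blast
    qed
  qed
qed

lemma mag_eq: "T g \<noteq> 0 \<Longrightarrow> \<forall>x. T x \<noteq> 0 \<longrightarrow> x \<le> g \<Longrightarrow> mag T = g"
  unfolding mag_def by (rule Greatest_equality) auto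

lemma MAG2:
  fixes T :: "'g::linordered_ab_group_add series"
  assumes rs: "ratio_set \<mu>" and ne: "T \<noteq> (\<lambda>_. 0)"
    and sub: "\<forall>x. T x \<noteq> 0 \<longrightarrow> x - c1 \<in> ratio_star \<mu> \<or> x - c2 \<in> ratio_star \<mu>"
  shows "T (mag T) \<noteq> 0 \<and> (\<forall>x. T x \<noteq> 0 \<longrightarrow> x \<le> mag T)"
proof -
  have "{x. T x \<noteq> 0} \<noteq> {}" using ne by auto
  then obtain g where g: "T g \<noteq> 0" "\<forall>x. T x \<noteq> 0 \<longrightarrow> x \<le> g"
    using GE2[OF rs, of "{x. T x \<noteq> 0}" c1 c2] sub by auto
  then show ?thesis using mag_eq[of T g] by simp
qed

lemma MAG:
  fixes T :: "'g::linordered_ab_group_add series"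
  assumes rs: "ratio_set \<mu>" and ne: "T \<noteq> (\<lambda>_. 0)"
    and sub: "\<forall>x. T x \<noteq> 0 \<longrightarrow> x - c \<in> ratio_star \<mu>"
  shows "T (mag T) \<noteq> 0 \<and> (\<forall>x. T x \<noteq> 0 \<longrightarrow> x \<le> mag T)"
  using MAG2[OF rs ne, of c c] sub by auto

lemma W:
  fixes T :: "'g::linordered_ab_group_add series"
  assumes rs: "ratio_set \<mu>" and w: "witnesses \<mu> T"
  shows "T (mag T) \<noteq> 0 \<and> (\<forall>x. T x \<noteq> 0 \<longrightarrow> x - mag T \<in> ratio_star \<mu> \<and> x \<le> mag T)"
proof -
  have s: "\<forall>x. T x \<noteq> 0 \<longrightarrow> x - mag T \<in> ratio_star \<mu>"
  proof (intro allI impI)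
    fix x assume "T x \<noteq> 0"
    then have "x \<in> supp T" by (simp add: supp_def)
    then obtain g where "x = mag T + g" "g \<in> ratio_star \<mu>" using w unfolding witnesses_def by blast
    then show "x - mag T \<in> ratio_star \<mu>" by simp
  qed
  have "\<forall>x. T x \<noteq> 0 \<longrightarrow> x \<le> mag T"
    using s star_le0[OF rs] diff_le_0_iff_le by blast
  moreover have "T (mag T) \<noteq> 0" using MAG[OF rs _ s] w by (simp add: witnesses_def)
  ultimately show ?thesis using s by blast
qed

lemma MULT: assumes "series_mult A B m \<noteq> 0" shows "\<exists>x. A x \<noteq> 0 \<and> B (m - x) \<noteq> 0"
proof (rule ccontr)
  assume "\<not> ?thesis"
  then have e: "{a. A a \<noteq> 0 \<and> B (m - a) \<noteq> 0} = {}" by auto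
  show False using assms unfolding series_mult_def e by simp
qed

lemma MULTtop:
  fixes A B :: "'g::linordered_ab_group_add series"
  assumes "\<forall>x. A x \<noteq> 0 \<longrightarrow> x \<le> p" "\<forall>y. B y \<noteq> 0 \<longrightarrow> y \<le> q"
  shows "series_mult A B (p + q) = A p * B q"
proof -
  have "{a. A a \<noteq> 0 \<and> B (p + q - a) \<noteq> 0} = (if A p \<noteq> 0 \<and> B q \<noteq> 0 then {p} else {})"
  proof -
    have eqp: "a = p" if "A a \<noteq> 0" "B (p + q - a) \<noteq> 0" for a
    proof -
      have "a \<le> p" using assms(1) that by blast
      moreover have "p + q - a \<le> q" using assms(2) that by blast
      then have "p \<le> a" by (simp add: algebra_simps)
      ultimately show ?thesis by simp
    qed
    have "A a \<noteq> 0 \<and> B (p + q - a) \<noteq> 0 \<longleftrightarrow> (a = p \<and> A p \<noteq> 0 \<and> B q \<noteq> 0)" for a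
      using eqp[of a] by auto
    then show ?thesis by auto
  qed
  then show ?thesis unfolding series_mult_def by auto
qed

lemma SUMNZ: assumes "series_sum A m \<noteq> 0" shows "\<exists>j. A j m \<noteq> 0"
proof (rule ccontr)
  assume "\<not> ?thesis"
  then have e: "{j. A j m \<noteq> 0} = {}" by auto
  show False using assms unfolding series_sum_def e by simp
qed

lemma SUMtop: "A 0 m \<noteq> 0 \<Longrightarrow> \<forall>j>0. A j m = 0 \<Longrightarrow> series_sum A m = A 0 m"
proof -
  assume "A 0 m \<noteq> 0" "\<forall>j>0. A j m = 0"
  then have "{j. A j m \<noteq> 0} = {0}" by auto
  then show ?thesis unfolding series_sum_def by simp
qed


lemma diff3: "((x::'g::ab_group_add) - z) + (z - y) = x - y" by simp

theorem lemma3p21: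
  fixes \<mu> :: "'g::linordered_ab_group_add set"
    and V :: "'g series" and A B :: "nat \<Rightarrow> 'g series"
  assumes "ratio_set \<mu>"
    and "witnesses \<mu> V"
    and "geom_conv \<mu> B"
    and "\<And>j. witnesses \<mu> (A j)"
    and "\<And>j. asymp_equiv (A j) (series_mult (B j) V)"
  shows "geom_conv \<mu> A \<and> asymp_equiv (series_sum A) (series_mult (series_sum B) V)"
proof -
  note rs = assms(1)
  have wB: "\<And>j. witnesses \<mu> (B j)" and lessB: "\<And>j. series_less_mu \<mu> (B (Suc j)) (B j)"
    using assms(3) unfolding geom_conv_def by auto
  define a where "a = mag V"
  define b where "b j = mag (B j)" for j
  define \<alpha> where "\<alpha> j = b j + a" for j
  have V1: "V a \<noteq> 0" and V2: "\<And>x. V x \<noteq> 0 \<Longrightarrow> x - a \<in> ratio_star \<mu> \<and> x \<le> a"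
    using W[OF rs assms(2)] a_def by auto
  have B1: "\<And>j. B j (b j) \<noteq> 0" and B2: "\<And>j x. B j x \<noteq> 0 \<Longrightarrow> x - b j \<in> ratio_star \<mu> \<and> x \<le> b j"
    using W[OF rs wB] b_def by auto
  have bstep: "b (Suc j) - b j \<in> ratio_plus \<mu>" for j
  proof -
    have "b (Suc j) \<in> supp (B (Suc j))" using B1 by (simp add: supp_def)
    then obtain y where y: "y \<in> supp (B j)" "b (Suc j) - y \<in> ratio_plus \<mu>"
      using lessB[of j] unfolding series_less_mu_def mono_less_mu_def by blast
    have "y - b j \<in> ratio_star \<mu>" using y(1) B2 by (simp add: supp_def)
    then have "(b (Suc j) - y) + (y - b j) \<in> ratio_plus \<mu>" using plus_add y(2) by blast
    then show ?thesis by (simp only: diff3)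
  qed
  have bdec: "b (Suc k) - b 0 \<in> ratio_plus \<mu>" for k
  proof (induction k)
    case 0 then show ?case using bstep[of 0] by simp
  next
    case (Suc k)
    have "(b (Suc (Suc k)) - b (Suc k)) + (b (Suc k) - b 0) \<in> ratio_plus \<mu>"
      using plus_add[OF bstep plus_star[OF Suc.IH]] .
    then show ?case by (simp only: diff3)
  qed
  have bR: "b j - b 0 \<in> ratio_star \<mu>" for j
  proof (cases j)
    case 0 then show ?thesis using star_0[of \<mu>] by simp
  next
    case (Suc k) then show ?thesis using plus_star[OF bdec[of k]] by simp
  qed
  have blt: "b j < b 0" if jpos: "j > 0" for j
  proof -
    obtain k where k: "j = Suc k" using jpos by (cases j) auto
    have "b j - b 0 < 0" using plus_lt0[OF rs bdec[of k]] k by simp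
    then show ?thesis by simp
  qed
  define Pr where "Pr j = series_mult (B j) V" for j
  have Ptop: "Pr j (\<alpha> j) = B j (b j) * V a" for j
    using MULTtop[of "B j" "b j" V a] B2 V2 by (simp add: Pr_def \<alpha>_def)
  have Psupp: "m - \<alpha> j \<in> ratio_star \<mu>" if nzm: "Pr j m \<noteq> 0" for j m
  proof -
    obtain x where x: "B j x \<noteq> 0" "V (m - x) \<noteq> 0" using MULT[of "B j" V m] nzm unfolding Pr_def by blast
    have "(x - b j) + ((m - x) - a) \<in> ratio_star \<mu>" using star_add B2[OF x(1)] V2[OF x(2)] by blast
    moreover have "(x - b j) + ((m - x) - a) = m - \<alpha> j" by (simp add: \<alpha>_def algebra_simps)
    ultimately show ?thesis by simp
  qed
  have Ple: "m \<le> \<alpha> j" if "Pr j m \<noteq> 0" for j m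
    using Psupp[OF that] star_le0[OF rs] diff_le_0_iff_le by blast
  have Aj: "mag (A j) = \<alpha> j \<and> A j (\<alpha> j) = B j (b j) * V a" for j
  proof -
    define D where "D = (\<lambda>m. A j m - Pr j m)"
    define c where "c = mag (A j)"
    have ae: "D = (\<lambda>_. 0) \<or> mag D < c"
      using assms(5)[of j] by (simp add: asymp_equiv_def asymp_less_def D_def Pr_def c_def)
    have WA1: "A j c \<noteq> 0" and WA2: "\<And>x. A j x \<noteq> 0 \<Longrightarrow> x - c \<in> ratio_star \<mu> \<and> x \<le> c"
      using W[OF rs assms(4)[of j]] c_def by auto
    have Dsub: "\<forall>x. D x \<noteq> 0 \<longrightarrow> x - c \<in> ratio_star \<mu> \<or> x - \<alpha> j \<in> ratio_star \<mu>"
      unfolding D_def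
    proof (intro allI impI)
      fix x assume "A j x - Pr j x \<noteq> 0"
      then have "A j x \<noteq> 0 \<or> Pr j x \<noteq> 0" by auto
      then show "x - c \<in> ratio_star \<mu> \<or> x - \<alpha> j \<in> ratio_star \<mu>" using WA2 Psupp by blast
    qed
    have Dmag: "D (mag D) \<noteq> 0 \<and> (\<forall>x. D x \<noteq> 0 \<longrightarrow> x \<le> mag D)" if "D \<noteq> (\<lambda>_. 0)"
      using MAG2[OF rs that Dsub] .
    have nz: "D \<noteq> (\<lambda>_. 0)" if "D x \<noteq> 0" for x using that by auto
    have "\<not> \<alpha> j < c"
    proof
      assume h: "\<alpha> j < c"
      have "Pr j c = 0" using Ple h by force
      then have Dc: "D c \<noteq> 0" using WA1 by (simp add: D_def)
      then have "c \<le> mag D" "mag D < c" using Dmag[OF nz[OF Dc]] ae nz[OF Dc] by auto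
      then show False by simp
    qed
    moreover have "\<not> c < \<alpha> j"
    proof
      assume h: "c < \<alpha> j"
      have "A j (\<alpha> j) = 0" using WA2 h by force
      then have Dc: "D (\<alpha> j) \<noteq> 0" using Ptop B1 V1 by (simp add: D_def)
      then have "\<alpha> j \<le> mag D" "mag D < c" using Dmag[OF nz[OF Dc]] ae nz[OF Dc] by auto
      then show False using h by simp
    qed
    ultimately have c\<alpha>: "c = \<alpha> j" by simp
    have "D (\<alpha> j) = 0"
    proof (rule ccontr)
      assume Dc: "D (\<alpha> j) \<noteq> 0"
      then have "\<alpha> j \<le> mag D" "mag D < c" using Dmag[OF nz[OF Dc]] ae nz[OF Dc] by auto
      then show False using c\<alpha> by simp
    qed
    then show ?thesis using c\<alpha> Ptop c_def by (simp add: D_def)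
  qed
  have A1: "A j (\<alpha> j) \<noteq> 0" for j using Aj[of j] B1 V1 by simp
  have A2: "x - \<alpha> j \<in> ratio_star \<mu> \<and> x \<le> \<alpha> j" if "A j x \<noteq> 0" for j x
    using W[OF rs assms(4)[of j]] Aj[of j] that by auto
  have less: "series_less_mu \<mu> (A (Suc j)) (A j)" for j
    unfolding series_less_mu_def mono_less_mu_def
  proof
    fix x assume "x \<in> supp (A (Suc j))"
    then have x: "x - \<alpha> (Suc j) \<in> ratio_star \<mu>" using A2 by (simp add: supp_def)
    have "\<alpha> (Suc j) - \<alpha> j \<in> ratio_plus \<mu>" using bstep[of j] by (simp add: \<alpha>_def)
    then have "(\<alpha> (Suc j) - \<alpha> j) + (x - \<alpha> (Suc j)) \<in> ratio_plus \<mu>" using plus_add x by blast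
    then have "x - \<alpha> j \<in> ratio_plus \<mu>" by (simp only: add.commute[of "\<alpha> (Suc j) - \<alpha> j"] diff3)
    moreover have "\<alpha> j \<in> supp (A j)" using A1 by (simp add: supp_def)
    ultimately show "\<exists>y\<in>supp (A j). x - y \<in> ratio_plus \<mu>" by blast
  qed
  have GA: "geom_conv \<mu> A" unfolding geom_conv_def using assms(4) less by blast
  define T where "T = series_sum A"
  define S where "S = series_sum B"
  define SV where "SV = series_mult S V"
  have \<alpha>R: "\<alpha> j - \<alpha> 0 \<in> ratio_star \<mu>" for j using bR[of j] by (simp add: \<alpha>_def)
  have \<alpha>lt: "\<alpha> j < \<alpha> 0" if "j > 0" for j using blt[OF that] by (simp add: \<alpha>_def)
  have Tsupp: "m - \<alpha> 0 \<in> ratio_star \<mu>" if nzm: "T m \<noteq> 0" for m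
  proof -
    obtain j where "A j m \<noteq> 0" using SUMNZ[of A m] nzm unfolding T_def by blast
    then have "(m - \<alpha> j) + (\<alpha> j - \<alpha> 0) \<in> ratio_star \<mu>" using A2 \<alpha>R star_add by blast
    then show ?thesis by (simp only: diff3)
  qed
  have Tle: "m \<le> \<alpha> 0" if "T m \<noteq> 0" for m
    using Tsupp[OF that] star_le0[OF rs] diff_le_0_iff_le by blast
  have Ttop: "T (\<alpha> 0) = A 0 (\<alpha> 0)"
  proof -
    have "\<forall>j>0. A j (\<alpha> 0) = 0"
    proof (intro allI impI)
      fix j :: nat assume "j > 0"
      then have "\<alpha> j < \<alpha> 0" by (rule \<alpha>lt)
      then show "A j (\<alpha> 0) = 0" using A2[of j "\<alpha> 0"] by force
    qed
    then show ?thesis using SUMtop[of A "\<alpha> 0"] A1[of 0] by (simp add: T_def)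
  qed
  have Ssupp: "m - b 0 \<in> ratio_star \<mu>" if nzm: "S m \<noteq> 0" for m
  proof -
    obtain j where "B j m \<noteq> 0" using SUMNZ[of B m] nzm unfolding S_def by blast
    then have "(m - b j) + (b j - b 0) \<in> ratio_star \<mu>" using B2 bR star_add by blast
    then show ?thesis by (simp only: diff3)
  qed
  have Sle: "m \<le> b 0" if "S m \<noteq> 0" for m
    using Ssupp[OF that] star_le0[OF rs] diff_le_0_iff_le by blast
  have Stop: "S (b 0) = B 0 (b 0)"
  proof -
    have "\<forall>j>0. B j (b 0) = 0"
    proof (intro allI impI)
      fix j :: nat assume "j > 0"
      then have "b j < b 0" by (rule blt)
      then show "B j (b 0) = 0" using B2[of j "b 0"] by force
    qed
    then show ?thesis using SUMtop[of B "b 0"] B1[of 0] by (simp add: S_def)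
  qed
  have SVtop: "SV (\<alpha> 0) = B 0 (b 0) * V a"
    using MULTtop[of S "b 0" V a] Sle V2 Stop by (simp add: SV_def \<alpha>_def)
  have SVsupp: "m - \<alpha> 0 \<in> ratio_star \<mu>" if nzm: "SV m \<noteq> 0" for m
  proof -
    obtain x where x: "S x \<noteq> 0" "V (m - x) \<noteq> 0" using MULT[of S V m] nzm unfolding SV_def by blast
    have "(x - b 0) + ((m - x) - a) \<in> ratio_star \<mu>" using star_add Ssupp[OF x(1)] V2[OF x(2)] by blast
    moreover have "(x - b 0) + ((m - x) - a) = m - \<alpha> 0" by (simp add: \<alpha>_def algebra_simps)
    ultimately show ?thesis by simp
  qed
  define E where "E = (\<lambda>m. T m - SV m)"
  have T0: "T (\<alpha> 0) \<noteq> 0" using Ttop A1[of 0] by simp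
  have Tne: "T \<noteq> (\<lambda>_. 0)" using T0 by auto
  have magT: "mag T = \<alpha> 0" using mag_eq[of T "\<alpha> 0"] T0 Tle by blast
  have E0: "E (\<alpha> 0) = 0" using Ttop SVtop Aj[of 0] by (simp add: E_def)
  have Esupp: "\<forall>x. E x \<noteq> 0 \<longrightarrow> x - \<alpha> 0 \<in> ratio_star \<mu>"
    unfolding E_def
  proof (intro allI impI)
    fix x assume "T x - SV x \<noteq> 0"
    then have "T x \<noteq> 0 \<or> SV x \<noteq> 0" by auto
    then show "x - \<alpha> 0 \<in> ratio_star \<mu>" using Tsupp SVsupp by blast
  qed
  have "E = (\<lambda>_. 0) \<or> mag E < mag T"
  proof (cases "E = (\<lambda>_. 0)")
    case False
    then have m1: "E (mag E) \<noteq> 0" using MAG[OF rs False Esupp] by blast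
    then have "mag E - \<alpha> 0 \<in> ratio_star \<mu>" using Esupp by blast
    then have "mag E \<le> \<alpha> 0" using star_le0[OF rs] diff_le_0_iff_le by blast
    moreover have "mag E \<noteq> \<alpha> 0" using m1 E0 by auto
    ultimately have "mag E < \<alpha> 0" by (simp add: order.not_eq_order_implies_strict)
    then show ?thesis using magT by simp
  qed simp
  then have "asymp_equiv T SV"
    unfolding asymp_equiv_def asymp_less_def using Tne by (simp add: E_def)
  then show ?thesis using GA by (simp add: T_def SV_def S_def)
qed

end
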